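(* Let $p\ge 1$, let $\mathcal{T}$ be any set of $n$ tasks with latent wait times $t_1,\dots,t_n\ge 0$, and let $\pi$ be any tour of $\mathcal{T}$ starting at the vehicle start point $x_s$. Then \[ l(\pi)\le \Big(Q\,(p+1)\,c^p(\pi)^p\Big)^{\frac{1}{p+1}}. \]
   Context: A single vehicle moves at unit speed (so distances equal travel times). All tasks, and the vehicle start point $x_s$, lie in a connected planar region $\mathcal{E}\subset\mathbb{R}^2$; $Q'$ denotes the maximum Euclidean distance between any two of these points, $\bar s>0$ is the expected service time of a task, and $Q=Q'+\bar s$. A task $\tau_i$ has a location $x_i\in\mathcal{E}$ and a latent wait time $t_i\ge 0$ (time it has already waited when the tour is planned). A tour $\pi=(x_s,\tau_1,\dots,\tau_n)$ is an ordering in which every task of $\mathcal{T}$ is visited exactly once, starting from $x_s$; writing $x_0=x_s$ and indexing tasks in tour order, let $l_j=\|x_j-x_{j-1}\|$ for $j=1,\dots,n$ and $l(\pi)=\sum_{j=1}^n l_j$ (the length of $\pi$). For $p\ge1$ the cost of $\pi$ is \[ c^p(\pi)=\Big(\sum_{i=1}^n\Big(t_i+\sum_{j=1}^i l_j\Big)^p\Big)^{1/p}. \] *)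

theory Defs
  imports "HOL-Analysis.Analysis"
begin

type_synonym point = "real ^ 2"

text \<open>Tasks are indexed 1..n, with locations y i and latent wait times w i.
  A tour is a bijection ord of {1..n}: the k-th visited task is ord k.\<close>

definition tour_pos :: "point \<Rightarrow> (nat \<Rightarrow> point) \<Rightarrow> (nat \<Rightarrow> nat) \<Rightarrow> nat \<Rightarrow> point" where
  "tour_pos xs y ord k = (if k = 0 then xs else y (ord k))"

definition leg :: "point \<Rightarrow> (nat \<Rightarrow> point) \<Rightarrow> (nat \<Rightarrow> nat) \<Rightarrow> nat \<Rightarrow> real" where
  "leg xs y ord j = dist (tour_pos xs y ord j) (tour_pos xs y ord (j - 1))"

definition tour_length :: "point \<Rightarrow> (nat \<Rightarrow> point) \<Rightarrow> (nat \<Rightarrow> nat) \<Rightarrow> nat \<Rightarrow> real" where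
  "tour_length xs y ord n = (\<Sum>j=1..n. leg xs y ord j)"

definition tour_cost :: "real \<Rightarrow> point \<Rightarrow> (nat \<Rightarrow> point) \<Rightarrow> (nat \<Rightarrow> real) \<Rightarrow> (nat \<Rightarrow> nat) \<Rightarrow> nat \<Rightarrow> real" where
  "tour_cost p xs y w ord n =
     (\<Sum>i=1..n. (w (ord i) + (\<Sum>j=1..i. leg xs y ord j)) powr p) powr (1 / p)"

definition Qprime :: "point \<Rightarrow> (nat \<Rightarrow> point) \<Rightarrow> nat \<Rightarrow> real" where
  "Qprime xs y n = Max {dist a b | a b. a \<in> insert xs (y ` {1..n}) \<and> b \<in> insert xs (y ` {1..n})}"

end

theory Submission imports Defs begin

lemma key_ineq:
  fixes a b p :: real
  assumes "0 \<le> a" "a \<le> b" "p \<ge> 1"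
  shows "b powr (p+1) - a powr (p+1) \<le> (p+1) * b powr p * (b - a)"
proof (cases "a = 0")
  case True
  have "b powr (p+1) = b powr p * b" using assms by (simp add: powr_add)
  moreover have "b powr p * b \<le> (p+1) * (b powr p * b)"
    using mult_right_mono[of 1 "p+1" "b powr p * b"] assms by simp
  ultimately show ?thesis using True assms by (simp add: mult.assoc)
next
  case False
  show ?thesis
  proof (cases "a = b")
    case True then show ?thesis by simp
  next
    case False
    with \<open>a \<noteq> 0\<close> assms have ab: "0 < a" "a < b" by auto
    have "\<And>x. a \<le> x \<Longrightarrow> x \<le> b \<Longrightarrow> ((\<lambda>z. z powr (p+1)) has_real_derivative (p+1) * x powr (p+1-1)) (at x)"
    proof -
      fix x assume "a \<le> x" "x \<le> b"
      then have "x > 0" using ab by auto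
      from has_real_derivative_powr[OF this, of "p+1"] show "((\<lambda>z. z powr (p+1)) has_real_derivative (p+1) * x powr (p+1-1)) (at x)" .
    qed
    from MVT2[OF ab(2) this] obtain z where z: "a < z" "z < b"
      "b powr (p+1) - a powr (p+1) = (b - a) * ((p+1) * z powr (p+1-1))" by blast
    have "z powr p \<le> b powr p" using z ab assms by (intro powr_mono2) auto
    then show ?thesis using z ab assms
      by (simp add: mult_left_mono mult.commute mult.left_commute)
  qed
qed

lemma sum_ineq:
  fixes f :: "nat \<Rightarrow> real" and K p :: real
  assumes "p \<ge> 1" "\<And>j. 1 \<le> j \<Longrightarrow> j \<le> m \<Longrightarrow> 0 \<le> f j \<and> f j \<le> K"
  shows "(\<Sum>j=1..m. f j) powr (p+1) \<le> (p+1) * K * (\<Sum>i=1..m. (\<Sum>j=1..i. f j) powr p)"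
  using assms(2)
proof (induction m)
  case 0
  then show ?case by simp
next
  case (Suc m)
  define a where "a = (\<Sum>j=1..m. f j)"
  define b where "b = (\<Sum>j=1..Suc m. f j)"
  have fm: "0 \<le> f (Suc m)" "f (Suc m) \<le> K" using Suc.prems by auto
  have a0: "0 \<le> a" unfolding a_def using Suc.prems by (intro sum_nonneg) auto
  have bab: "b = a + f (Suc m)" unfolding a_def b_def by simp
  have IH: "a powr (p+1) \<le> (p+1) * K * (\<Sum>i=1..m. (\<Sum>j=1..i. f j) powr p)"
    unfolding a_def using Suc by auto
  have "b powr (p+1) \<le> a powr (p+1) + (p+1) * b powr p * f (Suc m)"
    using key_ineq[of a b p] a0 fm bab assms(1) by auto
  also have "(p+1) * b powr p * f (Suc m) \<le> (p+1) * K * b powr p"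
  proof -
    have bk: "b powr p * f (Suc m) \<le> b powr p * K" using fm by (intro mult_left_mono) (auto simp del: powr_add)
    have "(p+1) * (b powr p * f (Suc m)) \<le> (p+1) * (b powr p * K)" using mult_left_mono[OF bk, of "p+1"] assms(1) by simp
    then show ?thesis by (simp add: mult_ac)
  qed
  finally have "b powr (p+1) \<le> (p+1) * K * (\<Sum>i=1..m. (\<Sum>j=1..i. f j) powr p) + (p+1) * K * b powr p"
    using IH by linarith
  then show ?case unfolding b_def by (simp add: distrib_left)
qed

theorem lemma1:
  fixes E :: "point set" and xs :: point and y :: "nat \<Rightarrow> point"
    and w :: "nat \<Rightarrow> real" and ord :: "nat \<Rightarrow> nat"
    and n :: nat and p sbar :: real
  assumes "connected E"
    and "xs \<in> E" and "\<forall>i\<in>{1..n}. y i \<in> E"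
    and "\<forall>i\<in>{1..n}. w i \<ge> 0"
    and "sbar > 0"
    and "p \<ge> 1"
    and "bij_betw ord {1..n} {1..n}"
  shows "tour_length xs y ord n
           \<le> ((Qprime xs y n + sbar) * (p + 1) * (tour_cost p xs y w ord n) powr p) powr (1 / (p + 1))"
proof -
  have ordin: "\<And>i. i \<in> {1..n} \<Longrightarrow> ord i \<in> {1..n}"
    by (rule bij_betw_apply[OF assms(7)])
  define A where "A = insert xs (y ` {1..n})"
  have setA: "{dist a b | a b. a \<in> A \<and> b \<in> A} \<subseteq> (\<lambda>(a,b). dist a b) ` (A \<times> A)"
  proof
    fix x assume "x \<in> {dist a b | a b. a \<in> A \<and> b \<in> A}"
    then obtain a b where "x = dist a b" "a \<in> A" "b \<in> A" by blast
    then show "x \<in> (\<lambda>(a,b). dist a b) ` (A \<times> A)" by (simp add: image_iff) blast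
  qed
  have "finite A" unfolding A_def by simp
  then have finA: "finite {dist a b | a b. a \<in> A \<and> b \<in> A}"
    by (intro finite_subset[OF setA]) simp
  have posA: "\<And>k. k \<le> n \<Longrightarrow> tour_pos xs y ord k \<in> A"
    unfolding tour_pos_def A_def using ordin by auto
  define K where "K = Qprime xs y n + sbar"
  have legK: "\<And>j. 1 \<le> j \<Longrightarrow> j \<le> n \<Longrightarrow> 0 \<le> leg xs y ord j \<and> leg xs y ord j \<le> K"
  proof -
    fix j assume j: "1 \<le> j" "j \<le> n"
    have "leg xs y ord j \<in> {dist a b | a b. a \<in> A \<and> b \<in> A}"
    proof -
      have "tour_pos xs y ord j \<in> A" "tour_pos xs y ord (j-1) \<in> A" using posA j by auto
      then show ?thesis unfolding leg_def by blast
    qed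
    then have "leg xs y ord j \<le> Qprime xs y n"
      unfolding Qprime_def A_def[symmetric] using finA by (rule Max_ge[rotated])
    then show "0 \<le> leg xs y ord j \<and> leg xs y ord j \<le> K"
      unfolding K_def leg_def using assms(5) by auto
  qed
  define S where "S i = (\<Sum>j=1..i. leg xs y ord j)" for i
  define C where "C i = w (ord i) + S i" for i
  have S0: "\<And>i. i \<le> n \<Longrightarrow> 0 \<le> S i" unfolding S_def using legK by (intro sum_nonneg) auto
  have L: "tour_length xs y ord n = S n" unfolding tour_length_def S_def ..
  have step1: "S n powr (p+1) \<le> (p+1) * K * (\<Sum>i=1..n. S i powr p)"
    unfolding S_def using sum_ineq[of p n "leg xs y ord" K, OF assms(6) legK] by blast
  have step2: "(\<Sum>i=1..n. S i powr p) \<le> (\<Sum>i=1..n. C i powr p)"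
  proof (rule sum_mono)
    fix i assume i: "i \<in> {1..n}"
    have "0 \<le> w (ord i)" using assms(4) ordin[OF i] by auto
    then show "S i powr p \<le> C i powr p" unfolding C_def
      using S0[of i] i assms(6) by (intro powr_mono2) auto
  qed
  have Cnn: "0 \<le> (\<Sum>i=1..n. C i powr p)" by (intro sum_nonneg) auto
  have tc: "tour_cost p xs y w ord n powr p = (\<Sum>i=1..n. C i powr p)"
    unfolding tour_cost_def C_def S_def using assms(6) Cnn[unfolded C_def S_def]
    by (simp add: powr_powr)
  have "dist xs xs \<in> {dist a b | a b. a \<in> A \<and> b \<in> A}" unfolding A_def by blast
  then have "dist xs xs \<le> Qprime xs y n"
    unfolding Qprime_def A_def[symmetric] using finA by (rule Max_ge[rotated])
  then have K0: "0 \<le> K" using assms(5) unfolding K_def by simp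
  have pk: "0 \<le> (p+1)*K" using K0 assms(6) by simp
  have "S n powr (p+1) \<le> (p+1) * K * (\<Sum>i=1..n. C i powr p)"
    using step1 mult_left_mono[OF step2 pk] by linarith
  also have "\<dots> = K * (p+1) * tour_cost p xs y w ord n powr p" unfolding tc by (simp only: mult.commute)
  finally have "S n powr (p+1) \<le> K * (p+1) * tour_cost p xs y w ord n powr p" .
  then have "(S n powr (p+1)) powr (1/(p+1)) \<le> (K * (p+1) * tour_cost p xs y w ord n powr p) powr (1/(p+1))"
    using assms(6) by (intro powr_mono2) auto
  moreover have "(S n powr (p+1)) powr (1/(p+1)) = S n"
    using S0[of n] assms(6) by (simp add: powr_powr)
  ultimately show ?thesis unfolding L K_def by simp
qed

end
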